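(* Let $m\geq 2$ be an integer, $(t_j)_{j=0}^{\infty}$ the $TM_m$ sequence and $\mathbf{t}=t_0t_1t_2\ldots$. Then for every positive integer $n$, $p_{\mathbf{t}}(n)\leq m^3 n$.
   Context: For an integer $m\geq 2$, the $TM_m$ sequence $(t_n)_{n=0}^{\infty}$ is defined by: if $n=\sum_{j=0}^{k}c_j m^j$ is the base-$m$ expansion of $n\geq 0$ (digits $c_j\in\{0,\ldots,m-1\}$), then $t_n:=\sum_{j=0}^{k}c_j \bmod m$. For an infinite word $\mathbf{w}$ over a finite alphabet, the complexity function $p_{\mathbf{w}}(n)$ is the number of distinct (contiguous) subwords of $\mathbf{w}$ of length $n$. *)

theory Defs
  imports Main
begin

fun digit_sum :: "nat \<Rightarrow> nat \<Rightarrow> nat" where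
  "digit_sum m n = (if m < 2 \<or> n = 0 then 0 else n mod m + digit_sum m (n div m))"

definition TM :: "nat \<Rightarrow> nat \<Rightarrow> nat" where
  "TM m n = digit_sum m n mod m"

definition factor :: "(nat \<Rightarrow> 'a) \<Rightarrow> nat \<Rightarrow> nat \<Rightarrow> 'a list" where
  "factor w i n = map w [i..<i+n]"

definition complexity :: "(nat \<Rightarrow> 'a) \<Rightarrow> nat \<Rightarrow> nat" where
  "complexity w n = card {factor w i n | i. True}"

end

theory Submission
  imports Defs
begin

lemma ds0: "digit_sum m 0 = 0"
  by (subst digit_sum.simps) simp

lemma ds_step: "m \<ge> 2 \<Longrightarrow> digit_sum m n = n mod m + digit_sum m (n div m)"
proof (cases "n = 0")
  case True then show ?thesis by (simp add: ds0)
next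
  case False
  assume "m \<ge> 2" then show ?thesis using False by (subst digit_sum.simps) simp
qed

lemma ds_add:
  assumes m: "m \<ge> 2"
  shows "s < m^k \<Longrightarrow> digit_sum m (q*m^k+s) = digit_sum m q + digit_sum m s"
proof (induction k arbitrary: q s)
  case 0 then show ?case by (simp add: ds0)
next
  case (Suc k)
  define n where "n = q*m^(Suc k)+s"
  have e: "q*m^(Suc k) = m * (q*m^k)" by simp
  have nmod: "n mod m = s mod m" unfolding n_def e by simp
  have ndiv: "n div m = q*m^k + s div m" unfolding n_def e using m by simp
  have sl: "s div m < m^k" using Suc.prems m
    by (metis div_less_iff_less_mult mult.commute not_numeral_le_zero not_gr_zero power_Suc)
  have "digit_sum m n = n mod m + digit_sum m (n div m)" using ds_step[OF m] .
  also have "\<dots> = s mod m + digit_sum m q + digit_sum m (s div m)"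
    using Suc.IH[OF sl] nmod ndiv by simp
  also have "\<dots> = digit_sum m q + digit_sum m s" using ds_step[OF m, of s] by simp
  finally show ?case unfolding n_def .
qed

lemma TM_add:
  assumes "m \<ge> 2" "s < m^k"
  shows "TM m (q*m^k+s) = (TM m q + TM m s) mod m"
  unfolding TM_def ds_add[OF assms] by (rule mod_add_eq[symmetric])

lemma factor_alt: "factor w i n = map (\<lambda>j. w (i+j)) [0..<n]"
  unfolding factor_def by (rule nth_equalityI) auto

theorem lemma4p1:
  fixes m n :: nat
  assumes "m \<ge> 2" and "n \<ge> 1"
  shows "complexity (TM m) n \<le> m ^ 3 * n"
proof -
  have ex: "\<exists>k. n \<le> m^k"
  proof
    have "n < 2^n" by (rule less_exp)
    also have "\<dots> \<le> m^n" using assms(1) by (simp add: power_mono)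
    finally show "n \<le> m^n" by simp
  qed
  define k where "k = (LEAST k. n \<le> m^k)"
  define L where "L = m^k"
  have nL: "n \<le> L" unfolding L_def k_def by (rule LeastI_ex[OF ex])
  have Lm: "L \<le> m*n"
  proof (cases k)
    case 0 then show ?thesis using assms unfolding L_def by simp
  next
    case (Suc k')
    have "\<not> n \<le> m^k'" unfolding k_def
      by (metis Suc k_def lessI not_less_Least)
    then show ?thesis unfolding L_def Suc using assms by simp
  qed
  have Lpos: "L > 0" using nL assms by simp
  define F where "F = (\<lambda>(r::nat,a::nat,b::nat). map (\<lambda>j. if r+j < L then (a + TM m (r+j)) mod m
        else (b + TM m (r+j-L)) mod m) [0..<n])"
  have key: "factor (TM m) i n = F (i mod L, TM m (i div L), TM m (i div L + 1))" for i
  proof -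
    have "TM m (i+j) = (if i mod L+j < L then (TM m (i div L) + TM m (i mod L+j)) mod m
        else (TM m (i div L + 1) + TM m (i mod L+j-L)) mod m)" if j: "j < n" for j
    proof (cases "i mod L + j < L")
      case True
      have "i + j = (i div L)*m^k + (i mod L + j)" unfolding L_def[symmetric] by simp
      then have "TM m (i+j) = TM m ((i div L)*m^k + (i mod L + j))" by (rule arg_cong)
      also have "\<dots> = (TM m (i div L) + TM m (i mod L+j)) mod m"
        using True TM_add[OF assms(1), of "i mod L + j" k "i div L"] unfolding L_def by simp
      finally show ?thesis using True by simp
    next
      case False
      have r: "i mod L < L" using Lpos by simp
      have lt: "i mod L + j - L < m^k" using r j nL False unfolding L_def by linarith
      have h1: "i = i div L * L + i mod L" by simp
      have h2: "(i div L + 1)*L = i div L * L + L" by simp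
      have "i + j = (i div L + 1)*L + (i mod L + j - L)"
        using False h1 h2 by linarith
      then have "i + j = (i div L + 1)*m^k + (i mod L + j - L)" unfolding L_def .
      then have "TM m (i+j) = TM m ((i div L + 1)*m^k + (i mod L + j - L))" by (rule arg_cong)
      also have "\<dots> = (TM m (i div L + 1) + TM m (i mod L+j-L)) mod m"
        using TM_add[OF assms(1) lt, of "i div L + 1"] by simp
      finally show ?thesis using False by simp
    qed
    then show ?thesis unfolding factor_alt F_def by simp
  qed
  have sub: "{factor (TM m) i n | i. True} \<subseteq> F ` ({..<L} \<times> {..<m} \<times> {..<m})"
  proof
    fix x assume "x \<in> {factor (TM m) i n | i. True}"
    then obtain i where x: "x = factor (TM m) i n" by blast
    have TMlt: "TM m y < m" for y using assms(1) unfolding TM_def by (intro mod_less_divisor) linarith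
    show "x \<in> F ` ({..<L} \<times> {..<m} \<times> {..<m})" 
    proof (rule image_eqI)
      show "x = F (i mod L, TM m (i div L), TM m (i div L + 1))" using key[of i] x by simp
      show "(i mod L, TM m (i div L), TM m (i div L + 1)) \<in> {..<L} \<times> {..<m} \<times> {..<m}"
        using Lpos TMlt by simp
    qed
  qed
  have "complexity (TM m) n \<le> card (F ` ({..<L} \<times> {..<m} \<times> {..<m}))"
    unfolding complexity_def by (rule card_mono[OF _ sub]) simp
  also have "\<dots> \<le> card ({..<L} \<times> {..<m} \<times> {..<m})" by (rule card_image_le) simp
  also have "\<dots> = L*m*m" by (simp add: card_cartesian_product)
  also have "\<dots> \<le> (m*n)*m*m" using Lm by simp
  also have "\<dots> = m^3*n" by (simp add: power3_eq_cube)
  finally show ?thesis .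
qed

end
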